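(* Let $G$ be a finite two-player zero-sum simultaneous-move game with perfect information on which SM-MCTS is run, let $h$ be a decision node of $G$, and let $\epsilon,c\ge0$. Let $A$ be an $\epsilon$-Hannan consistent algorithm which generates the sequence of actions $(i(t))$ of player 1 at $h$, and let $(j(t))$ be the actions chosen by the adversary (player 2) at $h$. Let $v_{ij}$ be the value of the subgame rooted at the child $h_{ij}$. If almost surely $\limsup_{n\to\infty}|\bar s_{ij}(n)-v_{ij}|\le c\epsilon$ for each $i,j$, and $A$ is $\epsilon$-UPO, then almost surely \[\limsup_{t\to\infty}\frac1t\left(\max_{i_0}\sum_{s=1}^t v_{i_0j(s)}-\sum_{s=1}^t v_{i(s)j(s)}\right)\le 2(c+1)\epsilon.\] Consequently the choice of actions $(i(t))$ made by $A$ is $2(c+1)\epsilon$-Hannan consistent with respect to the matrix game $(v_{ij})$.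
   Context: Game: finite rooted tree; decision nodes $h$ have finite action sets $\mathcal A_1(h),\mathcal A_2(h)$, joint action $(i,j)$ leading to child $h_{ij}$; terminal utilities $u_1\in[0,1]$, $u_2=-u_1$; the value of a subgame is its minimax value. SM-MCTS: each node of the search tree holds one bandit-algorithm instance per player; at each visit of $h$ the instances choose $(i,j)$, the search recursively returns a value $x$ from $h_{ij}$, player 1's instance at $h$ is updated with reward $x$ (player 2's with $1-x$), and $x$ is passed upward. Index visits of $h$ by $t=1,2,\dots$; $i(t),j(t)$ are the actions chosen; $t_{ij}$ is the number of visits $\le t$ with joint action $(i,j)$. $s_{ij}(n)$ is the value returned from $h_{ij}$ the $n$-th time $(i,j)$ is chosen at $h$; $\bar s_{ij}(n)=\frac1n\sum_{m\le n}s_{ij}(m)$. The bandit reward of action $i$ for player 1 at visit $t$ is $x_i(t)=s_{ij(t)}((t-1)_{ij(t)}+1)$, i.e. the value that would be observed the next time $(i,j(t))$ is chosen. Bandit regret $r(t)=\frac1t(\max_k\sum_{s\le t}x_k(s)-\sum_{s\le t}x_{i(s)}(s))$; $\epsilon$-Hannan consistent: $\limsup_t r(t)\le\epsilon$ a.s. against every adversary. UPO: let $t^*_{ij}(k)=\min\{t:t_{ij}=k\}$ (with $t^*_{ij}(0)=0$), $w_{ij}(n)=1+|\{t:t^*_{ij}(n-1)\le t\le t^*_{ij}(n),\ j(t)=j,\ i(t)\ne i\}|$, $\tilde s_{ij}(n)=\frac{\sum_{m\le n}w_{ij}(m)s_{ij}(m)}{\sum_{m\le n}w_{ij}(m)}$.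 $A$ is $\epsilon$-UPO if for every such game, every node $h$ and all $i,j$, almost surely $\limsup_{n\to\infty}|\tilde s_{ij}(n)-\bar s_{ij}(n)|\le\epsilon$.
   Formalization: The $\epsilon$-UPO property at h also demands that, almost surely, every joint action (i,j) be chosen at h infinitely often, so that each $t^*_{ij}(n)$ exists. The paper assumes this as well. *)

theory Defs
  imports "HOL-Probability.Probability"
begin

text \<open>Run of SM-MCTS at a fixed decision node h. Visits of h are indexed by
  t = 1, 2, ...; ia t and jb t are the actions of player 1 and 2 at visit t;
  s a b n is the value returned from the child h_ab the n-th time (n = 1, 2, ...)
  the joint action (a,b) is chosen at h. Values at index 0 are junk.\<close>

definition visits :: "(nat \<Rightarrow> 'a) \<Rightarrow> (nat \<Rightarrow> 'b) \<Rightarrow> 'a \<Rightarrow> 'b \<Rightarrow> nat \<Rightarrow> nat" where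
  "visits ia jb a b t = card {u \<in> {1..t}. ia u = a \<and> jb u = b}"

definition first_visit :: "(nat \<Rightarrow> 'a) \<Rightarrow> (nat \<Rightarrow> 'b) \<Rightarrow> 'a \<Rightarrow> 'b \<Rightarrow> nat \<Rightarrow> nat" where
  "first_visit ia jb a b k = (LEAST t. visits ia jb a b t = k)"

definition avg :: "(nat \<Rightarrow> real) \<Rightarrow> nat \<Rightarrow> real" where
  "avg x n = (\<Sum>m = 1..n. x m) / real n"

definition upo_weight :: "(nat \<Rightarrow> 'a) \<Rightarrow> (nat \<Rightarrow> 'b) \<Rightarrow> 'a \<Rightarrow> 'b \<Rightarrow> nat \<Rightarrow> nat" where
  "upo_weight ia jb a b n = 1 + card {t. 1 \<le> t \<and> first_visit ia jb a b (n - 1) \<le> t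
       \<and> t \<le> first_visit ia jb a b n \<and> jb t = b \<and> ia t \<noteq> a}"

definition wavg :: "(nat \<Rightarrow> 'a) \<Rightarrow> (nat \<Rightarrow> 'b) \<Rightarrow> 'a \<Rightarrow> 'b \<Rightarrow> (nat \<Rightarrow> real) \<Rightarrow> nat \<Rightarrow> real" where
  "wavg ia jb a b x n =
     (\<Sum>m = 1..n. real (upo_weight ia jb a b m) * x m) / (\<Sum>m = 1..n. real (upo_weight ia jb a b m))"

definition bandit_reward :: "(nat \<Rightarrow> 'a) \<Rightarrow> (nat \<Rightarrow> 'b) \<Rightarrow> ('a \<Rightarrow> 'b \<Rightarrow> nat \<Rightarrow> real) \<Rightarrow> 'a \<Rightarrow> nat \<Rightarrow> real" where
  "bandit_reward ia jb s k t = s k (jb t) (visits ia jb k (jb t) (t - 1) + 1)"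

definition bandit_regret :: "'a set \<Rightarrow> (nat \<Rightarrow> 'a) \<Rightarrow> (nat \<Rightarrow> 'b) \<Rightarrow> ('a \<Rightarrow> 'b \<Rightarrow> nat \<Rightarrow> real) \<Rightarrow> nat \<Rightarrow> real" where
  "bandit_regret I ia jb s t =
     (Max ((\<lambda>k. \<Sum>u = 1..t. bandit_reward ia jb s k u) ` I)
      - (\<Sum>u = 1..t. bandit_reward ia jb s (ia u) u)) / real t"

definition matrix_regret :: "'a set \<Rightarrow> (nat \<Rightarrow> 'a) \<Rightarrow> (nat \<Rightarrow> 'b) \<Rightarrow> ('a \<Rightarrow> 'b \<Rightarrow> real) \<Rightarrow> nat \<Rightarrow> real" where
  "matrix_regret I ia jb v t =
     (Max ((\<lambda>k. \<Sum>u = 1..t. v k (jb u)) ` I) - (\<Sum>u = 1..t. v (ia u) (jb u))) / real t"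

text \<open>The UPO property at (a,b) on one sample path: the quantities t*_ab(n) are all
  defined (so that tilde s is defined) and limsup |tilde s - bar s| <= eps.\<close>
definition upo_at :: "real \<Rightarrow> (nat \<Rightarrow> 'a) \<Rightarrow> (nat \<Rightarrow> 'b) \<Rightarrow> ('a \<Rightarrow> 'b \<Rightarrow> nat \<Rightarrow> real) \<Rightarrow> 'a \<Rightarrow> 'b \<Rightarrow> bool" where
  "upo_at \<epsilon> ia jb s a b \<longleftrightarrow>
     (\<forall>n. \<exists>t. visits ia jb a b t = n) \<and>
     limsup (\<lambda>n. ereal \<bar>wavg ia jb a b (s a b) n - avg (s a b) n\<bar>) \<le> ereal \<epsilon>"

end

theory Submission
  imports Defs
begin


lemma visits_0[simp]: "visits ia jb a b 0 = 0"
  by (simp add: visits_def)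

lemma visits_Suc: "visits ia jb a b (Suc t) = visits ia jb a b t + (if ia (Suc t) = a \<and> jb (Suc t) = b then 1 else 0)"
proof -
  let ?S = "{u \<in> {1..t}. ia u = a \<and> jb u = b}"
  have i: "{1..Suc t} = insert (Suc t) {1..t}" by (rule atLeastAtMostSuc_conv) simp
  have n: "Suc t \<notin> ?S" by simp
  have f: "finite ?S" by simp
  show ?thesis
  proof (cases "ia (Suc t) = a \<and> jb (Suc t) = b")
    case True
    then have "{u \<in> {1..Suc t}. ia u = a \<and> jb u = b} = insert (Suc t) ?S"
      unfolding i by blast
    then show ?thesis using True n f unfolding visits_def by simp
  next
    case False
    then have "{u \<in> {1..Suc t}. ia u = a \<and> jb u = b} = ?S"
      unfolding i by blast
    then show ?thesis using False unfolding visits_def by simp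
  qed
qed

lemma visits_le_Suc: "visits ia jb a b t \<le> visits ia jb a b (Suc t)"
  by (simp add: visits_Suc)

lemma visits_mono: "t \<le> t' \<Longrightarrow> visits ia jb a b t \<le> visits ia jb a b t'"
  by (rule lift_Suc_mono_le[of "visits ia jb a b"]) (rule visits_le_Suc)

lemma visits_ivt: "n \<le> visits ia jb a b t \<Longrightarrow> \<exists>t'\<le>t. visits ia jb a b t' = n"
proof (induction t)
  case 0 then have "visits ia jb a b 0 = n" by simp
  then show ?case by blast
next
  case (Suc t)
  show ?case
  proof (cases "n \<le> visits ia jb a b t")
    case True
    then obtain t' where "t' \<le> t" "visits ia jb a b t' = n" using Suc.IH by blast
    then have "t' \<le> Suc t \<and> visits ia jb a b t' = n" by simp
    then show ?thesis by blast
  next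
    case False
    have "visits ia jb a b (Suc t) \<le> visits ia jb a b t + 1" by (simp add: visits_Suc)
    then have "visits ia jb a b (Suc t) = n" using Suc.prems False by linarith
    then show ?thesis by blast
  qed
qed

locale reach =
  fixes ia :: "nat \<Rightarrow> 'a" and jb :: "nat \<Rightarrow> 'b" and a b
  assumes reach: "\<And>n. \<exists>t. visits ia jb a b t = n"
begin

abbreviation "V \<equiv> visits ia jb a b"
abbreviation "fv \<equiv> first_visit ia jb a b"

lemma V_fv[simp]: "V (fv n) = n"
proof -
  have "\<exists>t. V t = n" by (rule reach)
  then show ?thesis unfolding first_visit_def by (rule LeastI_ex)
qed

lemma fv_le_iff: "fv n \<le> t \<longleftrightarrow> n \<le> V t"
proof
  assume "fv n \<le> t"
  then have "V (fv n) \<le> V t" by (rule visits_mono)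
  then show "n \<le> V t" by simp
next
  assume "n \<le> V t"
  then obtain t' where t': "t' \<le> t" "V t' = n" using visits_ivt[of n ia jb a b t] by blast
  have "fv n \<le> t'" unfolding first_visit_def by (rule Least_le) (rule t'(2))
  then show "fv n \<le> t" using t'(1) by linarith
qed

lemma less_fv_iff: "t < fv n \<longleftrightarrow> V t < n"
proof -
  have "fv n \<le> t \<longleftrightarrow> n \<le> V t" by (rule fv_le_iff)
  then show ?thesis by linarith
qed

lemma fv_ge1: "1 \<le> n \<Longrightarrow> 1 \<le> fv n"
  using less_fv_iff[of 0 n] by simp

lemma fv_props:
  assumes "1 \<le> n"
  shows "V (fv n - 1) = n - 1" "ia (fv n) = a" "jb (fv n) = b"
proof -
  have s: "Suc (fv n - 1) = fv n" using fv_ge1[OF assms] by simp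
  have lt: "V (fv n - 1) < n" using less_fv_iff[of "fv n - 1" n] fv_ge1[OF assms] by simp
  have eq: "V (fv n) = V (fv n - 1) + (if ia (fv n) = a \<and> jb (fv n) = b then 1 else 0)"
    using visits_Suc[of ia jb a b "fv n - 1"] unfolding s .
  have c: "ia (fv n) = a \<and> jb (fv n) = b"
  proof (rule ccontr)
    assume "\<not> (ia (fv n) = a \<and> jb (fv n) = b)"
    then have "(if ia (fv n) = a \<and> jb (fv n) = b then 1 else 0) = (0::nat)" by (rule if_not_P)
    then have "V (fv n) = V (fv n - 1)" using eq by linarith
    then show False using lt by simp
  qed
  then have "(if ia (fv n) = a \<and> jb (fv n) = b then 1 else 0) = (1::nat)" by (rule if_P)
  then have "V (fv n) = V (fv n - 1) + 1" using eq by linarith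
  then show "V (fv n - 1) = n - 1" by simp
  show "ia (fv n) = a" "jb (fv n) = b" using c by auto
qed

lemma F_eq:
  assumes n1: "1 \<le> n"
  shows "{u. 1 \<le> u \<and> jb u = b \<and> V (u - 1) + 1 = n} =
    insert (fv n) {t. 1 \<le> t \<and> fv (n - 1) \<le> t \<and> t \<le> fv n \<and> jb t = b \<and> ia t \<noteq> a}"
    (is "?F = insert _ ?W")
proof (intro set_eqI iffI)
  fix u assume u: "u \<in> ?F"
  then have u1: "1 \<le> u" and ub: "jb u = b" and Vu0: "V (u - 1) + 1 = n" by auto
  have Vu: "V (u - 1) = n - 1" using Vu0 by linarith
  have s: "Suc (u - 1) = u" using u1 by linarith
  have "V (u - 1) < n" using Vu0 by linarith
  then have "u - 1 < fv n" using less_fv_iff by blast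
  then have ule: "u \<le> fv n" by linarith
  have "n - 1 \<le> V (u - 1)" using Vu by linarith
  then have "fv (n - 1) \<le> u - 1" using fv_le_iff by blast
  then have lo: "fv (n - 1) \<le> u" by linarith
  show "u \<in> insert (fv n) ?W"
  proof (cases "u = fv n")
    case False
    with ule have "u < fv n" by linarith
    then have Vlt: "V u < n" using less_fv_iff by blast
    have eq: "V u = V (u - 1) + (if ia u = a \<and> jb u = b then 1 else 0)"
      using visits_Suc[of ia jb a b "u - 1"] unfolding s .
    have "\<not> (ia u = a \<and> jb u = b)"
    proof
      assume "ia u = a \<and> jb u = b"
      then have "(if ia u = a \<and> jb u = b then 1 else 0) = (1::nat)" by (rule if_P)
      then have "V u = V (u - 1) + 1" using eq by linarith
      then show False using Vu0 Vlt by linarith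
    qed
    then have "ia u \<noteq> a" using ub by blast
    then have "u \<in> ?W" using u1 ub ule lo by blast
    then show ?thesis by blast
  qed blast
next
  fix u assume u: "u \<in> insert (fv n) ?W"
  show "u \<in> ?F"
  proof (cases "u = fv n")
    case True
    have "V (fv n - 1) + 1 = n" using fv_props(1)[OF n1] n1 by linarith
    then show ?thesis using True fv_props(3)[OF n1] fv_ge1[OF n1] by blast
  next
    case False
    then have "u \<in> ?W" using u by blast
    then have u1: "1 \<le> u" and l: "fv (n - 1) \<le> u" and r: "u \<le> fv n" and ub: "jb u = b" and ua: "ia u \<noteq> a"
      by auto
    have s: "Suc (u - 1) = u" using u1 by linarith
    have eq: "V u = V (u - 1) + (if ia u = a \<and> jb u = b then 1 else 0)"
      using visits_Suc[of ia jb a b "u - 1"] unfolding s .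
    have "\<not> (ia u = a \<and> jb u = b)" using ua by blast
    then have "(if ia u = a \<and> jb u = b then 1 else 0) = (0::nat)" by (rule if_not_P)
    then have e1: "V u = V (u - 1)" using eq by linarith
    have e2: "n - 1 \<le> V u" using fv_le_iff l by blast
    have "u < fv n" using False r by linarith
    then have e3: "V u < n" using less_fv_iff by blast
    have "V (u - 1) + 1 = n" using e1 e2 e3 n1 by linarith
    then show ?thesis using u1 ub by blast
  qed
qed

lemma F_card:
  assumes "1 \<le> n"
  shows "card {u. 1 \<le> u \<and> jb u = b \<and> V (u - 1) + 1 = n} = upo_weight ia jb a b n"
proof -
  let ?W = "{t. 1 \<le> t \<and> fv (n - 1) \<le> t \<and> t \<le> fv n \<and> jb t = b \<and> ia t \<noteq> a}"
  have "finite ?W" by (rule finite_subset[of _ "{..fv n}"]) auto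
  moreover have "fv n \<notin> ?W" using fv_props[OF assms] by auto
  ultimately show ?thesis unfolding F_eq[OF assms] upo_weight_def by simp
qed

lemma F_sub:
  assumes "1 \<le> n" "n \<le> V t"
  shows "{u. 1 \<le> u \<and> jb u = b \<and> V (u - 1) + 1 = n} \<subseteq> {1..t}"
proof
  fix u assume u: "u \<in> {u. 1 \<le> u \<and> jb u = b \<and> V (u - 1) + 1 = n}"
  then have "u - 1 < fv n" using less_fv_iff by auto
  moreover have "fv n \<le> t" using fv_le_iff assms by simp
  ultimately show "u \<in> {1..t}" using u by auto
qed

end



context reach begin

lemma inner_sum:
  assumes "finite A" "\<And>x. x \<in> A \<Longrightarrow> g x = y"
  shows "(\<Sum>x\<in>A. (f :: nat \<Rightarrow> real) (g x)) = real (card A) * f y"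
proof -
  have "(\<Sum>x\<in>A. f (g x)) = (\<Sum>x\<in>A. f y)" by (rule sum.cong[OF refl]) (simp add: assms(2))
  then show ?thesis by simp
qed

lemma block_sum:
  fixes f :: "nat \<Rightarrow> real" and t :: nat
  defines "S \<equiv> {u \<in> {1..t}. jb u = b}"
  defines "m \<equiv> card {x \<in> S. V (x - 1) + 1 = V t + 1}"
  shows "(\<Sum>u\<in>S. f (V (u - 1) + 1)) =
           (\<Sum>n = 1..V t. real (upo_weight ia jb a b n) * f n) + real m * f (V t + 1)"
    and "m \<le> upo_weight ia jb a b (V t + 1)"
proof -
  let ?N = "V t"
  let ?g = "\<lambda>u. V (u - 1) + 1"
  have fS: "finite S" unfolding S_def by simp
  have gS: "?g ` S \<subseteq> {1..?N + 1}"
  proof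
    fix y assume "y \<in> ?g ` S"
    then obtain u where u: "u \<in> S" "y = ?g u" by blast
    have "u - 1 \<le> t" using u(1) unfolding S_def by auto
    then have "V (u - 1) \<le> ?N" by (rule visits_mono)
    then show "y \<in> {1..?N + 1}" using u(2) by simp
  qed
  have grp: "(\<Sum>y\<in>{1..?N + 1}. \<Sum>x\<in>{x \<in> S. ?g x = y}. f (?g x)) = (\<Sum>u\<in>S. f (?g u))"
    by (rule sum.group[OF fS finite_atLeastAtMost gS])
  have inner: "(\<Sum>x\<in>{x \<in> S. ?g x = y}. f (?g x)) = real (card {x \<in> S. ?g x = y}) * f y" for y
    by (rule inner_sum) (use fS in auto)
  have setF: "{x \<in> S. ?g x = y} = {u. 1 \<le> u \<and> jb u = b \<and> V (u - 1) + 1 = y}" if "1 \<le> y" "y \<le> ?N" for y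
  proof -
    have "{u. 1 \<le> u \<and> jb u = b \<and> V (u - 1) + 1 = y} \<subseteq> {1..t}" by (rule F_sub) (use that in auto)
    then show ?thesis unfolding S_def by auto
  qed
  have cardF: "card {x \<in> S. ?g x = y} = upo_weight ia jb a b y" if "1 \<le> y" "y \<le> ?N" for y
    using setF[OF that] F_card[OF that(1)] by simp
  have split: "{1..?N + 1} = insert (?N + 1) {1..?N}" by auto
  have "(\<Sum>u\<in>S. f (?g u)) = (\<Sum>y\<in>{1..?N + 1}. real (card {x \<in> S. ?g x = y}) * f y)"
    using grp inner by simp
  also have "\<dots> = (\<Sum>y\<in>{1..?N}. real (card {x \<in> S. ?g x = y}) * f y) + real m * f (?N + 1)"
    unfolding split m_def by simp
  also have "(\<Sum>y\<in>{1..?N}. real (card {x \<in> S. ?g x = y}) * f y) = (\<Sum>n = 1..?N. real (upo_weight ia jb a b n) * f n)"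
  proof (rule sum.cong[OF refl])
    fix y assume "y \<in> {1..?N}"
    then have "card {x \<in> S. ?g x = y} = upo_weight ia jb a b y" by (intro cardF) auto
    then show "real (card {x \<in> S. ?g x = y}) * f y = real (upo_weight ia jb a b y) * f y" by simp
  qed
  finally show "(\<Sum>u\<in>S. f (V (u - 1) + 1)) =
           (\<Sum>n = 1..V t. real (upo_weight ia jb a b n) * f n) + real m * f (V t + 1)" .
  have F1: "card {u. 1 \<le> u \<and> jb u = b \<and> V (u - 1) + 1 = ?N + 1} = upo_weight ia jb a b (?N + 1)"
    by (rule F_card) simp
  have "0 < upo_weight ia jb a b (?N + 1)" unfolding upo_weight_def by (rule add_pos_nonneg[OF zero_less_one zero_le])
  then have "0 < card {u. 1 \<le> u \<and> jb u = b \<and> V (u - 1) + 1 = ?N + 1}" using F1 by linarith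
  then have finF: "finite {u. 1 \<le> u \<and> jb u = b \<and> V (u - 1) + 1 = ?N + 1}" by (rule card_ge_0_finite)
  have "{x \<in> S. ?g x = ?N + 1} \<subseteq> {u. 1 \<le> u \<and> jb u = b \<and> V (u - 1) + 1 = ?N + 1}"
    unfolding S_def by auto
  then have "m \<le> card {u. 1 \<le> u \<and> jb u = b \<and> V (u - 1) + 1 = ?N + 1}"
    unfolding m_def by (rule card_mono[OF finF])
  then show "m \<le> upo_weight ia jb a b (V t + 1)" using F1 by simp
qed

end



lemma visits_at:
  assumes "1 \<le> u"
  shows "visits ia jb (ia u) (jb u) u = visits ia jb (ia u) (jb u) (u - 1) + 1"
proof -
  have s: "Suc (u - 1) = u" using assms by linarith
  have "visits ia jb (ia u) (jb u) u = visits ia jb (ia u) (jb u) (u - 1) + (if ia u = ia u \<and> jb u = jb u then 1 else 0)"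
    using visits_Suc[of ia jb "ia u" "jb u" "u - 1"] unfolding s .
  then show ?thesis by simp
qed

lemma sum_visits_Suc:
  "(\<Sum>n = 1..visits ia jb a b (Suc t). (g :: nat \<Rightarrow> real) n) =
     (\<Sum>n = 1..visits ia jb a b t. g n) + (if (a, b) = (ia (Suc t), jb (Suc t)) then g (visits ia jb a b t + 1) else 0)"
proof (cases "(a, b) = (ia (Suc t), jb (Suc t))")
  case True
  then have "visits ia jb a b (Suc t) = Suc (visits ia jb a b t)" using visits_Suc[of ia jb a b t] by auto
  then show ?thesis using True by simp
next
  case False
  then have "visits ia jb a b (Suc t) = visits ia jb a b t" using visits_Suc[of ia jb a b t] by auto
  then show ?thesis unfolding if_not_P[OF False] by simp
qed

lemma played_sum:
  fixes f :: "'a \<Rightarrow> 'b \<Rightarrow> nat \<Rightarrow> real"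
  assumes fin: "finite I" "finite J" and IJ: "\<And>u. 1 \<le> u \<Longrightarrow> ia u \<in> I \<and> jb u \<in> J"
  shows "(\<Sum>u = 1..t. f (ia u) (jb u) (visits ia jb (ia u) (jb u) u)) =
         (\<Sum>p\<in>I \<times> J. \<Sum>n = 1..visits ia jb (fst p) (snd p) t. f (fst p) (snd p) n)"
proof (induction t)
  case 0 then show ?case by simp
next
  case (Suc t)
  let ?p0 = "(ia (Suc t), jb (Suc t))"
  have p0: "?p0 \<in> I \<times> J" using IJ[of "Suc t"] by simp
  have "(\<Sum>p\<in>I \<times> J. \<Sum>n = 1..visits ia jb (fst p) (snd p) (Suc t). f (fst p) (snd p) n) =
        (\<Sum>p\<in>I \<times> J. (\<Sum>n = 1..visits ia jb (fst p) (snd p) t. f (fst p) (snd p) n) +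
            (if p = ?p0 then f (fst p) (snd p) (visits ia jb (fst p) (snd p) t + 1) else 0))"
  proof (rule sum.cong[OF refl])
    fix p :: "'a \<times> 'b"
    obtain a b where p: "p = (a, b)" by (cases p)
    show "(\<Sum>n = 1..visits ia jb (fst p) (snd p) (Suc t). f (fst p) (snd p) n) =
        (\<Sum>n = 1..visits ia jb (fst p) (snd p) t. f (fst p) (snd p) n) +
            (if p = ?p0 then f (fst p) (snd p) (visits ia jb (fst p) (snd p) t + 1) else 0)"
      unfolding p fst_conv snd_conv by (rule sum_visits_Suc)
  qed
  also have "\<dots> = (\<Sum>p\<in>I \<times> J. \<Sum>n = 1..visits ia jb (fst p) (snd p) t. f (fst p) (snd p) n) +
      f (ia (Suc t)) (jb (Suc t)) (visits ia jb (ia (Suc t)) (jb (Suc t)) t + 1)"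
    using p0 fin by (simp add: sum.distrib)
  also have "visits ia jb (ia (Suc t)) (jb (Suc t)) t + 1 = visits ia jb (ia (Suc t)) (jb (Suc t)) (Suc t)"
    using visits_at[of "Suc t" ia jb] by simp
  finally show ?case using Suc.IH by simp
qed

lemma k_sum:
  assumes "finite J" and J: "\<And>u. 1 \<le> u \<Longrightarrow> jb u \<in> J"
  shows "(\<Sum>u = 1..t. bandit_reward ia jb s k u) =
     (\<Sum>b\<in>J. \<Sum>u\<in>{u \<in> {1..t}. jb u = b}. s k b (visits ia jb k b (u - 1) + 1))"
proof -
  have g: "jb ` {1..t} \<subseteq> J" using J by auto
  have "(\<Sum>u = 1..t. bandit_reward ia jb s k u) = (\<Sum>b\<in>J. \<Sum>u\<in>{u \<in> {1..t}. jb u = b}. bandit_reward ia jb s k u)"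
    by (rule sum.group[symmetric]) (use assms(1) g in auto)
  also have "\<dots> = (\<Sum>b\<in>J. \<Sum>u\<in>{u \<in> {1..t}. jb u = b}. s k b (visits ia jb k b (u - 1) + 1))"
    by (intro sum.cong refl) (simp add: bandit_reward_def)
  finally show ?thesis .
qed

lemma v_sum:
  fixes w :: "'b \<Rightarrow> real" and jb :: "nat \<Rightarrow> 'b"
  assumes "finite J" and J: "\<And>u. 1 \<le> u \<Longrightarrow> jb u \<in> J"
  shows "(\<Sum>u = 1..t. w (jb u)) = (\<Sum>b\<in>J. real (card {u \<in> {1..t}. jb u = b}) * w b)"
proof -
  have g: "jb ` {1..t} \<subseteq> J" using J by auto
  have "(\<Sum>u = 1..t. w (jb u)) = (\<Sum>b\<in>J. \<Sum>u\<in>{u \<in> {1..t}. jb u = b}. w (jb u))"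
    by (rule sum.group[symmetric]) (use assms(1) g in auto)
  also have "\<dots> = (\<Sum>b\<in>J. \<Sum>u\<in>{u \<in> {1..t}. jb u = b}. w b)"
    by (intro sum.cong refl) simp
  finally show ?thesis by simp
qed

lemma card_sum:
  fixes jb :: "nat \<Rightarrow> 'b"
  assumes "finite J" and J: "\<And>u. 1 \<le> u \<Longrightarrow> jb u \<in> J"
  shows "(\<Sum>b\<in>J. real (card {u \<in> {1..t}. jb u = b})) = real t"
  using v_sum[OF assms, where w="\<lambda>_. 1" and t=t] by simp




lemma convex_bound:
  fixes W r m A x v e :: real
  assumes W: "W > 0" and r: "r > 0" and m: "0 \<le> m" "m \<le> r"
    and h1: "\<bar>A / W - v\<bar> \<le> e" and h2: "\<bar>(A + r * x) / (W + r) - v\<bar> \<le> e"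
  shows "\<bar>A + m * x - v * (W + m)\<bar> \<le> e * (W + m)"
proof -
  have "(A - v * W) / W = A / W - v" using W by (simp add: diff_divide_distrib)
  then have "\<bar>(A - v * W) / W\<bar> \<le> e" using h1 by simp
  then have "\<bar>A - v * W\<bar> / W \<le> e" using W by (simp add: abs_divide)
  then have a1: "\<bar>A - v * W\<bar> \<le> e * W" using W by (simp add: pos_divide_le_eq)
  have Wr: "W + r > 0" using W r by simp
  have "(A + r * x - v * (W + r)) / (W + r) = (A + r * x) / (W + r) - v" using Wr by (simp add: diff_divide_distrib)
  then have "\<bar>(A + r * x - v * (W + r)) / (W + r)\<bar> \<le> e" using h2 by simp
  then have "\<bar>A + r * x - v * (W + r)\<bar> / (W + r) \<le> e" using Wr by (simp add: abs_divide)
  then have a2: "\<bar>A + r * x - v * (W + r)\<bar> \<le> e * (W + r)" using Wr by (simp add: pos_divide_le_eq)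
  define l where "l = m / r"
  have l0: "0 \<le> l" and l1: "l \<le> 1" unfolding l_def using m r by auto
  have lr: "l * r = m" unfolding l_def using r by simp
  have "(1 - l) * (A - v * W) + l * (A + r * x - v * (W + r)) = A - v * W + (l * r) * x - v * (l * r)"
    by (simp add: algebra_simps)
  then have id: "A + m * x - v * (W + m) = (1 - l) * (A - v * W) + l * (A + r * x - v * (W + r))"
    unfolding lr by (simp add: algebra_simps)
  have "\<bar>A + m * x - v * (W + m)\<bar> \<le> \<bar>(1 - l) * (A - v * W)\<bar> + \<bar>l * (A + r * x - v * (W + r))\<bar>"
    unfolding id by (rule abs_triangle_ineq)
  also have "\<dots> = (1 - l) * \<bar>A - v * W\<bar> + l * \<bar>A + r * x - v * (W + r)\<bar>"
    using l0 l1 by (simp add: abs_mult)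
  also have "\<dots> \<le> (1 - l) * (e * W) + l * (e * (W + r))"
  proof (rule add_mono)
    show "(1 - l) * \<bar>A - v * W\<bar> \<le> (1 - l) * (e * W)" using a1 l1 by (intro mult_left_mono) auto
    show "l * \<bar>A + r * x - v * (W + r)\<bar> \<le> l * (e * (W + r))" using a2 l0 by (intro mult_left_mono) auto
  qed
  also have "\<dots> = e * (W + l * r)" by (simp add: algebra_simps)
  finally show ?thesis using lr by simp
qed

context reach begin

lemma W_pos: "1 \<le> N \<Longrightarrow> 0 < (\<Sum>n = 1..N. real (upo_weight ia jb a b n))"
proof -
  assume "1 \<le> N"
  have "\<And>n. 0 < real (upo_weight ia jb a b n)"
    unfolding upo_weight_def of_nat_0_less_iff by (rule add_pos_nonneg[OF zero_less_one zero_le])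
  then show ?thesis using \<open>1 \<le> N\<close> by (intro sum_pos) auto
qed

lemma block_bound:
  fixes x :: "nat \<Rightarrow> real" and t :: nat and e v :: real
  assumes N1: "1 \<le> V t"
    and h1: "\<bar>wavg ia jb a b x (V t) - v\<bar> \<le> e"
    and h2: "\<bar>wavg ia jb a b x (V t + 1) - v\<bar> \<le> e"
  shows "\<bar>(\<Sum>u\<in>{u \<in> {1..t}. jb u = b}. x (V (u - 1) + 1)) - v * real (card {u \<in> {1..t}. jb u = b})\<bar>
           \<le> e * real (card {u \<in> {1..t}. jb u = b})"
proof -
  let ?S = "{u \<in> {1..t}. jb u = b}"
  let ?N = "V t"
  let ?w = "\<lambda>n. real (upo_weight ia jb a b n)"
  define m where "m = card {y \<in> ?S. V (y - 1) + 1 = V t + 1}"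
  have bs: "(\<Sum>u\<in>?S. x (V (u - 1) + 1)) = (\<Sum>n = 1..?N. ?w n * x n) + real m * x (?N + 1)"
    unfolding m_def by (rule block_sum(1))
  have bc: "(\<Sum>u\<in>?S. (\<lambda>_. 1::real) (V (u - 1) + 1)) = (\<Sum>n = 1..?N. ?w n * 1) + real m * 1"
    unfolding m_def by (rule block_sum(1))
  then have card: "real (card ?S) = (\<Sum>n = 1..?N. ?w n) + real m" by simp
  have mle: "m \<le> upo_weight ia jb a b (?N + 1)" unfolding m_def by (rule block_sum(2))
  have Wp: "0 < (\<Sum>n = 1..?N. ?w n)" using W_pos N1 by blast
  have rp: "0 < ?w (?N + 1)" unfolding upo_weight_def of_nat_0_less_iff by (rule add_pos_nonneg[OF zero_less_one zero_le])
  have w1: "wavg ia jb a b x ?N = (\<Sum>n = 1..?N. ?w n * x n) / (\<Sum>n = 1..?N. ?w n)"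
    unfolding wavg_def ..
  have w2: "wavg ia jb a b x (?N + 1) = ((\<Sum>n = 1..?N. ?w n * x n) + ?w (?N + 1) * x (?N + 1)) / ((\<Sum>n = 1..?N. ?w n) + ?w (?N + 1))"
    unfolding wavg_def by (simp add: sum.cl_ivl_Suc)
  have "\<bar>(\<Sum>n = 1..?N. ?w n * x n) + real m * x (?N + 1) - v * ((\<Sum>n = 1..?N. ?w n) + real m)\<bar>
        \<le> e * ((\<Sum>n = 1..?N. ?w n) + real m)"
    by (rule convex_bound[OF Wp rp]) (use mle h1 h2 w1 w2 in auto)
  then show ?thesis unfolding bs card .
qed

end



lemma limsup_ev:
  assumes "limsup (\<lambda>n. ereal (f n)) \<le> ereal L" "0 < d"
  shows "eventually (\<lambda>n. f n < L + d) sequentially"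
proof -
  have "ereal L < ereal (L + d)" using assms(2) by simp
  then have "limsup (\<lambda>n. ereal (f n)) < ereal (L + d)" using assms(1) by (rule le_less_trans[rotated])
  then have "eventually (\<lambda>n. ereal (f n) < ereal (L + d)) sequentially" by (rule Limsup_lessD)
  then show ?thesis by simp
qed

context reach begin

lemma transfer_ev:
  assumes "eventually P sequentially"
  shows "eventually (\<lambda>t. 1 \<le> V t \<and> (\<forall>n\<ge>V t. P n)) sequentially"
proof -
  obtain N0 where N0: "\<And>n. N0 \<le> n \<Longrightarrow> P n" using assms unfolding eventually_sequentially by blast
  show ?thesis unfolding eventually_sequentially
  proof (intro exI allI impI)
    fix t assume "fv (max N0 1) \<le> t"
    then have "max N0 1 \<le> V t" using fv_le_iff by blast
    then show "1 \<le> V t \<and> (\<forall>n\<ge>V t. P n)" using N0 by auto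
  qed
qed

end

lemma max_le_shift:
  fixes F G :: "'a \<Rightarrow> real"
  assumes "finite I" "I \<noteq> {}" "\<And>k. k \<in> I \<Longrightarrow> F k \<le> G k + e"
  shows "Max (F ` I) \<le> Max (G ` I) + e"
proof -
  have "Max (F ` I) \<in> F ` I" using assms(1,2) by (intro Max_in) auto
  then obtain k where k: "k \<in> I" "Max (F ` I) = F k" by blast
  have "G k \<le> Max (G ` I)" using assms(1) k(1) by (intro Max_ge) auto
  then show ?thesis using k assms(3)[OF k(1)] by linarith
qed




lemma pointwise_bound:
  fixes I :: "'a set" and J :: "'b set" and ia :: "nat \<Rightarrow> 'a" and jb :: "nat \<Rightarrow> 'b"
    and s :: "'a \<Rightarrow> 'b \<Rightarrow> nat \<Rightarrow> real" and v :: "'a \<Rightarrow> 'b \<Rightarrow> real" and e1 e2 :: real and t :: nat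
  assumes fI: "finite I" "I \<noteq> {}" and fJ: "finite J"
    and ia: "\<And>u. 1 \<le> u \<Longrightarrow> ia u \<in> I" and jb: "\<And>u. 1 \<le> u \<Longrightarrow> jb u \<in> J"
    and reach: "\<And>a b. a \<in> I \<Longrightarrow> b \<in> J \<Longrightarrow> reach ia jb a b"
    and t1: "1 \<le> t"
    and Q: "\<And>a b. a \<in> I \<Longrightarrow> b \<in> J \<Longrightarrow> 1 \<le> visits ia jb a b t \<and>
        (\<forall>n\<ge>visits ia jb a b t. \<bar>wavg ia jb a b (s a b) n - v a b\<bar> \<le> e1 \<and> \<bar>avg (s a b) n - v a b\<bar> \<le> e2)"
  shows "matrix_regret I ia jb v t \<le> bandit_regret I ia jb s t + e1 + e2"
proof -
  have IJ: "\<And>u. 1 \<le> u \<Longrightarrow> ia u \<in> I \<and> jb u \<in> J" using ia jb by blast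
  let ?S = "\<lambda>b. {u \<in> {1..t}. jb u = b}"
  let ?BR = "\<lambda>k. \<Sum>u = 1..t. bandit_reward ia jb s k u"
  let ?VS = "\<lambda>k. \<Sum>u = 1..t. v k (jb u)"
  have i: "?VS k \<le> ?BR k + e1 * real t" if k: "k \<in> I" for k
  proof -
    have blk: "real (card (?S b)) * v k b \<le> (\<Sum>u\<in>?S b. s k b (visits ia jb k b (u - 1) + 1)) + e1 * real (card (?S b))"
      if b: "b \<in> J" for b
    proof -
      interpret reach ia jb k b by (rule reach[OF k b])
      have q: "1 \<le> V t" "\<And>n. V t \<le> n \<Longrightarrow> \<bar>wavg ia jb k b (s k b) n - v k b\<bar> \<le> e1"
        using Q[OF k b] by auto
      have "\<bar>(\<Sum>u\<in>?S b. s k b (V (u - 1) + 1)) - v k b * real (card (?S b))\<bar> \<le> e1 * real (card (?S b))"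
        by (rule block_bound) (use q in auto)
      then show ?thesis by (simp add: abs_le_iff algebra_simps)
    qed
    have "?VS k = (\<Sum>b\<in>J. real (card (?S b)) * v k b)" by (rule v_sum[OF fJ jb])
    also have "\<dots> \<le> (\<Sum>b\<in>J. (\<Sum>u\<in>?S b. s k b (visits ia jb k b (u - 1) + 1)) + e1 * real (card (?S b)))"
      by (rule sum_mono) (rule blk)
    also have "\<dots> = ?BR k + e1 * real t"
      using k_sum[OF fJ jb, where t=t and ia=ia and s=s and k=k] card_sum[OF fJ jb, where t=t]
      by (simp add: sum.distrib sum_distrib_left[symmetric])
    finally show ?thesis .
  qed
  let ?V = "\<lambda>p. visits ia jb (fst p) (snd p) t"
  have br_played: "(\<Sum>u = 1..t. bandit_reward ia jb s (ia u) u) = (\<Sum>u = 1..t. s (ia u) (jb u) (visits ia jb (ia u) (jb u) u))"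
  proof (rule sum.cong[OF refl])
    fix u assume "u \<in> {1..t}"
    then have "visits ia jb (ia u) (jb u) u = visits ia jb (ia u) (jb u) (u - 1) + 1" by (intro visits_at) auto
    then show "bandit_reward ia jb s (ia u) u = s (ia u) (jb u) (visits ia jb (ia u) (jb u) u)"
      unfolding bandit_reward_def by simp
  qed
  have ps: "(\<Sum>u = 1..t. s (ia u) (jb u) (visits ia jb (ia u) (jb u) u)) =
         (\<Sum>p\<in>I \<times> J. \<Sum>n = 1..?V p. s (fst p) (snd p) n)"
    by (rule played_sum[OF fI(1) fJ IJ])
  have pv: "(\<Sum>u = 1..t. (\<lambda>a b n. v a b) (ia u) (jb u) (visits ia jb (ia u) (jb u) u)) =
         (\<Sum>p\<in>I \<times> J. \<Sum>n = 1..?V p. (\<lambda>a b n. v a b) (fst p) (snd p) n)"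
    by (rule played_sum[OF fI(1) fJ IJ])
  have pc: "(\<Sum>u = 1..t. (\<lambda>a b n. 1::real) (ia u) (jb u) (visits ia jb (ia u) (jb u) u)) =
         (\<Sum>p\<in>I \<times> J. \<Sum>n = 1..?V p. (\<lambda>a b n. 1::real) (fst p) (snd p) n)"
    by (rule played_sum[OF fI(1) fJ IJ])
  then have tsum: "real t = (\<Sum>p\<in>I \<times> J. real (?V p))" by simp
  have per: "(\<Sum>n = 1..?V p. s (fst p) (snd p) n) \<le> real (?V p) * v (fst p) (snd p) + e2 * real (?V p)"
    if p: "p \<in> I \<times> J" for p
  proof -
    have a: "fst p \<in> I" and b: "snd p \<in> J" using p by auto
    have q: "1 \<le> ?V p" "\<bar>avg (s (fst p) (snd p)) (?V p) - v (fst p) (snd p)\<bar> \<le> e2"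
      using Q[OF a b] by auto
    have pos: "0 < real (?V p)" using q(1) by simp
    have "(\<Sum>n = 1..?V p. s (fst p) (snd p) n) = real (?V p) * avg (s (fst p) (snd p)) (?V p)"
      unfolding avg_def using pos by simp
    also have "\<dots> \<le> real (?V p) * (v (fst p) (snd p) + e2)"
      using q(2) pos by (intro mult_left_mono) auto
    finally show ?thesis by (simp add: algebra_simps)
  qed
  have ii: "(\<Sum>u = 1..t. bandit_reward ia jb s (ia u) u) \<le> (\<Sum>u = 1..t. v (ia u) (jb u)) + e2 * real t"
  proof -
    have "(\<Sum>u = 1..t. bandit_reward ia jb s (ia u) u) = (\<Sum>p\<in>I \<times> J. \<Sum>n = 1..?V p. s (fst p) (snd p) n)"
      using br_played ps by simp
    also have "\<dots> \<le> (\<Sum>p\<in>I \<times> J. real (?V p) * v (fst p) (snd p) + e2 * real (?V p))"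
      by (rule sum_mono) (rule per)
    also have "\<dots> = (\<Sum>u = 1..t. v (ia u) (jb u)) + e2 * real t"
      using pv tsum by (simp add: sum.distrib sum_distrib_left)
    finally show ?thesis .
  qed
  have iii: "Max (?VS ` I) \<le> Max (?BR ` I) + e1 * real t"
    by (rule max_le_shift[OF fI]) (rule i)
  have tp: "0 < real t" using t1 by simp
  have "Max (?VS ` I) - (\<Sum>u = 1..t. v (ia u) (jb u)) \<le>
        (Max (?BR ` I) - (\<Sum>u = 1..t. bandit_reward ia jb s (ia u) u)) + (e1 + e2) * real t"
    using iii ii by (simp add: algebra_simps)
  then have "(Max (?VS ` I) - (\<Sum>u = 1..t. v (ia u) (jb u))) / real t \<le>
        ((Max (?BR ` I) - (\<Sum>u = 1..t. bandit_reward ia jb s (ia u) u)) + (e1 + e2) * real t) / real t"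
    using tp by (intro divide_right_mono) auto
  also have "\<dots> = (Max (?BR ` I) - (\<Sum>u = 1..t. bandit_reward ia jb s (ia u) u)) / real t + (e1 + e2)"
    using tp by (simp add: add_divide_distrib)
  finally show ?thesis unfolding matrix_regret_def bandit_regret_def by simp
qed




lemma path_main:
  fixes I :: "'a set" and J :: "'b set" and ia :: "nat \<Rightarrow> 'a" and jb :: "nat \<Rightarrow> 'b"
    and s :: "'a \<Rightarrow> 'b \<Rightarrow> nat \<Rightarrow> real" and v :: "'a \<Rightarrow> 'b \<Rightarrow> real" and \<epsilon> c :: real
  assumes fI: "finite I" "I \<noteq> {}" and fJ: "finite J"
    and ia: "\<And>u. 1 \<le> u \<Longrightarrow> ia u \<in> I" and jb: "\<And>u. 1 \<le> u \<Longrightarrow> jb u \<in> J"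
    and hannan: "limsup (\<lambda>t. ereal (bandit_regret I ia jb s t)) \<le> ereal \<epsilon>"
    and upo: "\<forall>a\<in>I. \<forall>b\<in>J. upo_at \<epsilon> ia jb s a b"
    and conv: "\<forall>a\<in>I. \<forall>b\<in>J. limsup (\<lambda>n. ereal \<bar>avg (s a b) n - v a b\<bar>) \<le> ereal (c * \<epsilon>)"
  shows "limsup (\<lambda>t. ereal (matrix_regret I ia jb v t)) \<le> ereal (2 * (c + 1) * \<epsilon>)"
proof (rule ereal_le_epsilon2)
  fix \<delta> :: real assume \<delta>: "0 < \<delta>"
  define d where "d = \<delta> / 4"
  have d: "0 < d" using \<delta> unfolding d_def by simp
  define e1 where "e1 = (c + 1) * \<epsilon> + 2 * d"
  define e2 where "e2 = c * \<epsilon> + d"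
  have reach: "reach ia jb a b" if "a \<in> I" "b \<in> J" for a b
    using upo that unfolding upo_at_def reach_def by blast
  have E1: "eventually (\<lambda>t. bandit_regret I ia jb s t < \<epsilon> + d) sequentially"
    by (rule limsup_ev[OF hannan d])
  have EQ: "eventually (\<lambda>t. 1 \<le> visits ia jb (fst p) (snd p) t \<and>
        (\<forall>n\<ge>visits ia jb (fst p) (snd p) t. \<bar>wavg ia jb (fst p) (snd p) (s (fst p) (snd p)) n - v (fst p) (snd p)\<bar> \<le> e1
            \<and> \<bar>avg (s (fst p) (snd p)) n - v (fst p) (snd p)\<bar> \<le> e2)) sequentially"
    if p: "p \<in> I \<times> J" for p
  proof -
    obtain a b where ab: "p = (a, b)" "a \<in> I" "b \<in> J" using p by auto
    interpret reach ia jb a b by (rule reach[OF ab(2,3)])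
    have l1: "limsup (\<lambda>n. ereal \<bar>wavg ia jb a b (s a b) n - avg (s a b) n\<bar>) \<le> ereal \<epsilon>"
      using upo ab unfolding upo_at_def by blast
    have l2: "limsup (\<lambda>n. ereal \<bar>avg (s a b) n - v a b\<bar>) \<le> ereal (c * \<epsilon>)"
      using conv ab by blast
    have "eventually (\<lambda>n. \<bar>wavg ia jb a b (s a b) n - avg (s a b) n\<bar> < \<epsilon> + d) sequentially"
      by (rule limsup_ev[OF l1 d])
    moreover have "eventually (\<lambda>n. \<bar>avg (s a b) n - v a b\<bar> < c * \<epsilon> + d) sequentially"
      by (rule limsup_ev[OF l2 d])
    ultimately have "eventually (\<lambda>n. \<bar>wavg ia jb a b (s a b) n - v a b\<bar> \<le> e1 \<and> \<bar>avg (s a b) n - v a b\<bar> \<le> e2) sequentially"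
    proof eventually_elim
      case (elim n)
      then show ?case unfolding e1_def e2_def by (simp add: abs_diff_le_iff abs_less_iff distrib_right)
    qed
    then have "eventually (\<lambda>t. 1 \<le> V t \<and> (\<forall>n\<ge>V t. \<bar>wavg ia jb a b (s a b) n - v a b\<bar> \<le> e1 \<and> \<bar>avg (s a b) n - v a b\<bar> \<le> e2)) sequentially"
      by (rule transfer_ev)
    then show ?thesis unfolding ab(1) by simp
  qed
  have EQall: "eventually (\<lambda>t. \<forall>p\<in>I \<times> J. 1 \<le> visits ia jb (fst p) (snd p) t \<and>
        (\<forall>n\<ge>visits ia jb (fst p) (snd p) t. \<bar>wavg ia jb (fst p) (snd p) (s (fst p) (snd p)) n - v (fst p) (snd p)\<bar> \<le> e1
            \<and> \<bar>avg (s (fst p) (snd p)) n - v (fst p) (snd p)\<bar> \<le> e2)) sequentially"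
    by (rule eventually_ball_finite) (use fI fJ EQ in auto)
  have Et: "eventually (\<lambda>t. 1 \<le> (t::nat)) sequentially" by (rule eventually_ge_at_top)
  have "eventually (\<lambda>t. ereal (matrix_regret I ia jb v t) \<le> ereal (2 * (c + 1) * \<epsilon> + \<delta>)) sequentially"
    using E1 EQall Et
  proof eventually_elim
    case (elim t)
    have "matrix_regret I ia jb v t \<le> bandit_regret I ia jb s t + e1 + e2"
    proof (rule pointwise_bound[OF fI fJ ia jb reach elim(3)])
      fix a b assume ab: "a \<in> I" "b \<in> J"
      show "1 \<le> visits ia jb a b t \<and>
        (\<forall>n\<ge>visits ia jb a b t. \<bar>wavg ia jb a b (s a b) n - v a b\<bar> \<le> e1 \<and> \<bar>avg (s a b) n - v a b\<bar> \<le> e2)"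
        using elim(2) ab by fastforce
    qed (auto)
    then have "matrix_regret I ia jb v t \<le> 2 * (c + 1) * \<epsilon> + \<delta>"
      using elim(1) unfolding e1_def e2_def d_def by (simp add: algebra_simps)
    then show ?case by simp
  qed
  then have "limsup (\<lambda>t. ereal (matrix_regret I ia jb v t)) \<le> ereal (2 * (c + 1) * \<epsilon> + \<delta>)"
    by (rule Limsup_bounded)
  then show "limsup (\<lambda>t. ereal (matrix_regret I ia jb v t)) \<le> ereal (2 * (c + 1) * \<epsilon>) + ereal \<delta>"
    by simp
qed



theorem proposition2:
  fixes M :: "'w measure" and I :: "'a set" and J :: "'b set"
    and ia :: "'w \<Rightarrow> nat \<Rightarrow> 'a" and jb :: "'w \<Rightarrow> nat \<Rightarrow> 'b"
    and s :: "'w \<Rightarrow> 'a \<Rightarrow> 'b \<Rightarrow> nat \<Rightarrow> real"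
    and v :: "'a \<Rightarrow> 'b \<Rightarrow> real" and \<epsilon> c :: real
  assumes "prob_space M"
    and "finite I" and "I \<noteq> {}" and "finite J" and "J \<noteq> {}"
    and "\<And>\<omega> t. \<omega> \<in> space M \<Longrightarrow> 1 \<le> t \<Longrightarrow> ia \<omega> t \<in> I"
    and "\<And>\<omega> t. \<omega> \<in> space M \<Longrightarrow> 1 \<le> t \<Longrightarrow> jb \<omega> t \<in> J"
    and "\<And>\<omega> a b n. \<omega> \<in> space M \<Longrightarrow> 0 \<le> s \<omega> a b n \<and> s \<omega> a b n \<le> 1"
    and "0 \<le> \<epsilon>" and "0 \<le> c"
    and hannan: "AE \<omega> in M. limsup (\<lambda>t. ereal (bandit_regret I (ia \<omega>) (jb \<omega>) (s \<omega>) t)) \<le> ereal \<epsilon>"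
    and upo: "\<And>a b. a \<in> I \<Longrightarrow> b \<in> J \<Longrightarrow> AE \<omega> in M. upo_at \<epsilon> (ia \<omega>) (jb \<omega>) (s \<omega>) a b"
    and conv: "\<And>a b. a \<in> I \<Longrightarrow> b \<in> J \<Longrightarrow>
       AE \<omega> in M. limsup (\<lambda>n. ereal \<bar>avg (s \<omega> a b) n - v a b\<bar>) \<le> ereal (c * \<epsilon>)"
  shows "AE \<omega> in M. limsup (\<lambda>t. ereal (matrix_regret I (ia \<omega>) (jb \<omega>) v t)) \<le> ereal (2 * (c + 1) * \<epsilon>)"
proof -
  have U: "AE \<omega> in M. \<forall>a\<in>I. \<forall>b\<in>J. upo_at \<epsilon> (ia \<omega>) (jb \<omega>) (s \<omega>) a b"
  proof (rule eventually_ball_finite[OF \<open>finite I\<close>], rule ballI)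
    fix a assume a: "a \<in> I"
    show "AE \<omega> in M. \<forall>b\<in>J. upo_at \<epsilon> (ia \<omega>) (jb \<omega>) (s \<omega>) a b"
      by (rule eventually_ball_finite[OF \<open>finite J\<close>]) (use upo a in blast)
  qed
  have C: "AE \<omega> in M. \<forall>a\<in>I. \<forall>b\<in>J. limsup (\<lambda>n. ereal \<bar>avg (s \<omega> a b) n - v a b\<bar>) \<le> ereal (c * \<epsilon>)"
  proof (rule eventually_ball_finite[OF \<open>finite I\<close>], rule ballI)
    fix a assume a: "a \<in> I"
    show "AE \<omega> in M. \<forall>b\<in>J. limsup (\<lambda>n. ereal \<bar>avg (s \<omega> a b) n - v a b\<bar>) \<le> ereal (c * \<epsilon>)"
      by (rule eventually_ball_finite[OF \<open>finite J\<close>]) (use conv a in blast)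
  qed
  show ?thesis using AE_space hannan U C
  proof eventually_elim
    case (elim \<omega>)
    show ?case
    proof (rule path_main)
      show "\<And>u. 1 \<le> u \<Longrightarrow> ia \<omega> u \<in> I" using assms(6) elim(1) by blast
      show "\<And>u. 1 \<le> u \<Longrightarrow> jb \<omega> u \<in> J" using assms(7) elim(1) by blast
    qed (use elim assms(2,3,4) in auto)
  qed
qed

end
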